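(* Let $X_1,X_2$, $A,B,C,D$, $X$, $\mathcal{A}$, $\mathcal{D}$ be as in the context with $L=0$, and assume $\overline{\mathsf{R}(A)}=X_1$ and $\overline{\mathsf{R}(D)}=X_2$. Then the operators $CA^{-1}:\mathsf{R}(A)\to X_2$, $Ax\mapsto Cx$, and $BD^{-1}:\mathsf{R}(D)\to X_1$, $Dy\mapsto By$, are well defined and extend uniquely to bounded operators $G=\overline{CA^{-1}}\in\mathscr{L}(X_1,X_2)$ and $H=\overline{BD^{-1}}\in\mathscr{L}(X_2,X_1)$. If one of the operators $I-HG$ and $I-GH$ is boundedly invertible, then $$\|\mathcal{D}x\|_X\lesssim\|\mathcal{A}x\|_X\quad\text{for all }x\in\mathsf{D}(\mathcal{D})=\mathsf{D}(\mathcal{A}).$$ In particular, if in addition $A$ and $D$ are sectorial, this estimate holds if for some $\varepsilon>0$ either $\sup\{\|B(t+D)^{-1}C(t+A)^{-1}\|:t\in(0,\varepsilon)\}<1$ or $\sup\{\|C(t+A)^{-1}B(t+D)^{-1}\|:t\in(0,\varepsilon)\}<1$.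
   Context: All Banach spaces are complex. A linear operator $T$ on a Banach space $Y$ is sectorial if there is $\omega\in(0,\pi)$ with $\sigma(T)\subseteq\{z\in\mathbb{C}:|\arg z|\le\omega\}\cup\{0\}$, $\overline{\mathsf{D}(T)}=\overline{\mathsf{R}(T)}=Y$ and $\sup_{|\arg\lambda|>\omega}\|\lambda(\lambda-T)^{-1}\|<\infty$. Setting: $X_1,X_2$ Banach spaces; $A$ on $X_1$ and $D$ on $X_2$ closed densely defined linear operators; $B:\mathsf{D}(B)\subseteq X_2\to X_1$, $C:\mathsf{D}(C)\subseteq X_1\to X_2$ linear with $\mathsf{D}(D)\subseteq\mathsf{D}(B)$, $\mathsf{D}(A)\subseteq\mathsf{D}(C)$ and constants $c_A,c_D\ge0$ with $\|Cx\|\le c_A\|Ax\|$ ($x\in\mathsf{D}(A)$), $\|By\|\le c_D\|Dy\|$ ($y\in\mathsf{D}(D)$) (this is the case $L=0$). $X=X_1\times X_2$, $\mathcal{A}=\begin{bmatrix}A&B\\C&D\end{bmatrix}$, $\mathcal{D}=\begin{bmatrix}A&0\\0&D\end{bmatrix}$, both with domain $\mathsf{D}(A)\times\mathsf{D}(D)$. *)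

theory Defs
  imports "HOL-Analysis.Analysis"
begin

class complex_vector = real_vector +
  fixes scaleC :: "complex \<Rightarrow> 'a \<Rightarrow> 'a" (infixr \<open>*\<^sub>C\<close> 75)
  assumes scaleC_add_right: "a *\<^sub>C (x + y) = a *\<^sub>C x + a *\<^sub>C y"
    and scaleC_add_left: "(a + b) *\<^sub>C x = a *\<^sub>C x + b *\<^sub>C x"
    and scaleC_scaleC: "a *\<^sub>C (b *\<^sub>C x) = (a * b) *\<^sub>C x"
    and scaleC_one: "1 *\<^sub>C x = x"
    and scaleR_scaleC: "r *\<^sub>R x = complex_of_real r *\<^sub>C x"

class complex_normed_vector = complex_vector + real_normed_vector +
  assumes norm_scaleC: "norm (a *\<^sub>C x) = cmod a * norm x"

text \<open>A complex Banach space is a type of class complex_normed_vector and banach.\<close>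

definition csubspace :: "'a::complex_vector set \<Rightarrow> bool" where
  "csubspace S \<longleftrightarrow> 0 \<in> S \<and> (\<forall>x\<in>S. \<forall>y\<in>S. x + y \<in> S) \<and> (\<forall>c. \<forall>x\<in>S. c *\<^sub>C x \<in> S)"

definition clinear_on :: "'a::complex_vector set \<Rightarrow> ('a \<Rightarrow> 'b::complex_vector) \<Rightarrow> bool" where
  "clinear_on S f \<longleftrightarrow> (\<forall>x\<in>S. \<forall>y\<in>S. f (x + y) = f x + f y) \<and> (\<forall>c. \<forall>x\<in>S. f (c *\<^sub>C x) = c *\<^sub>C f x)"

definition lin_op :: "'a::complex_vector set \<Rightarrow> ('a \<Rightarrow> 'b::complex_vector) \<Rightarrow> bool" where
  "lin_op S f \<longleftrightarrow> csubspace S \<and> clinear_on S f"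

definition bounded_clinear :: "('a::complex_normed_vector \<Rightarrow> 'b::complex_normed_vector) \<Rightarrow> bool" where
  "bounded_clinear f \<longleftrightarrow> clinear_on UNIV f \<and> (\<exists>K. \<forall>x. norm (f x) \<le> norm x * K)"

definition closed_dd_op :: "'a::complex_normed_vector set \<Rightarrow> ('a \<Rightarrow> 'b::complex_normed_vector) \<Rightarrow> bool" where
  "closed_dd_op D T \<longleftrightarrow> lin_op D T \<and> closed {(x, T x) | x. x \<in> D} \<and> closure D = UNIV"

text \<open>Inverse of an operator T with domain D (meaningful when T is a bijection D -> UNIV).\<close>
definition pinv :: "'a set \<Rightarrow> ('a \<Rightarrow> 'b) \<Rightarrow> 'b \<Rightarrow> 'a" where
  "pinv D T y = (THE x. x \<in> D \<and> T x = y)"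

definition boundedly_invertible :: "('a::complex_normed_vector \<Rightarrow> 'b::complex_normed_vector) \<Rightarrow> bool" where
  "boundedly_invertible T \<longleftrightarrow> bounded_clinear T \<and>
     (\<exists>S. bounded_clinear S \<and> (\<forall>x. S (T x) = x) \<and> (\<forall>y. T (S y) = y))"

definition in_resolvent_set :: "'a::complex_normed_vector set \<Rightarrow> ('a \<Rightarrow> 'a) \<Rightarrow> complex \<Rightarrow> bool" where
  "in_resolvent_set D T l \<longleftrightarrow> bij_betw (\<lambda>x. l *\<^sub>C x - T x) D UNIV \<and>
     bounded_clinear (pinv D (\<lambda>x. l *\<^sub>C x - T x))"

definition spectrum_op :: "'a::complex_normed_vector set \<Rightarrow> ('a \<Rightarrow> 'a) \<Rightarrow> complex set" where
  "spectrum_op D T = {l. \<not> in_resolvent_set D T l}"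

definition sectorial :: "'a::complex_normed_vector set \<Rightarrow> ('a \<Rightarrow> 'a) \<Rightarrow> bool" where
  "sectorial D T \<longleftrightarrow> (\<exists>\<omega>. 0 < \<omega> \<and> \<omega> < pi \<and>
     spectrum_op D T \<subseteq> {z. \<bar>Arg z\<bar> \<le> \<omega>} \<union> {0} \<and>
     closure D = UNIV \<and> closure (T ` D) = UNIV \<and>
     (\<exists>M. \<forall>l. \<bar>Arg l\<bar> > \<omega> \<longrightarrow> onorm (\<lambda>y. l *\<^sub>C pinv D (\<lambda>x. l *\<^sub>C x - T x) y) \<le> M))"

end

theory Submission
  imports Defs
begin

lemma scaleC_zero_left[simp]: "(0::complex) *\<^sub>C (x::'a::complex_vector) = 0"
  using scaleR_scaleC[of 0 x] by simp

lemma scaleC_of_real: "complex_of_real r *\<^sub>C (x::'a::complex_vector) = r *\<^sub>R x"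
  using scaleR_scaleC[of r x] by simp

lemma scaleC_minus_left: "(- c) *\<^sub>C (x::'a::complex_vector) = - (c *\<^sub>C x)"
proof -
  have "(c + - c) *\<^sub>C x = c *\<^sub>C x + (- c) *\<^sub>C x" by (rule scaleC_add_left)
  then have "c *\<^sub>C x + (- c) *\<^sub>C x = 0" by simp
  then show ?thesis by (simp add: add_eq_0_iff)
qed

lemma scaleC_minus_one: "(- 1) *\<^sub>C (x::'a::complex_vector) = - x"
  using scaleC_minus_left[of 1 x] by (simp add: scaleC_one)

lemma csubspace_diff: "csubspace S \<Longrightarrow> x \<in> S \<Longrightarrow> y \<in> S \<Longrightarrow> x - y \<in> S"
  unfolding csubspace_def using scaleC_minus_one[of y]
  by (metis diff_conv_add_uminus)

lemma clinear_on_diff: "csubspace S \<Longrightarrow> clinear_on S f \<Longrightarrow> x \<in> S \<Longrightarrow> y \<in> S \<Longrightarrow> f (x - y) = f x - f y"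
proof -
  assume S: "csubspace S" and f: "clinear_on S f" and x: "x \<in> S" and y: "y \<in> S"
  have my: "(- 1) *\<^sub>C y \<in> S" using S y unfolding csubspace_def by blast
  have "f (x - y) = f (x + (- 1) *\<^sub>C y)" by (simp add: scaleC_minus_one)
  also have "\<dots> = f x + f ((- 1) *\<^sub>C y)" using f x my unfolding clinear_on_def by blast
  also have "\<dots> = f x + (- 1) *\<^sub>C f y" using f y unfolding clinear_on_def by simp
  finally show ?thesis by (simp add: scaleC_minus_one)
qed

lemma bounded_clinear_imp_bounded_linear:
  assumes "bounded_clinear f" shows "bounded_linear f"
proof -
  from assms obtain K where f: "clinear_on UNIV f" and K: "\<forall>x. norm (f x) \<le> norm x * K"
    unfolding bounded_clinear_def by blast
  show ?thesis
  proof (rule bounded_linear_intro[where K=K])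
    show "f (x + y) = f x + f y" for x y using f unfolding clinear_on_def by blast
    show "f (r *\<^sub>R x) = r *\<^sub>R f x" for r x
      using f unfolding clinear_on_def by (simp add: scaleC_of_real[symmetric])
    show "norm (f x) \<le> norm x * K" for x using K by blast
  qed
qed

lemma bounded_linear_scaleC_right: "bounded_linear (\<lambda>z::'a::complex_normed_vector. c *\<^sub>C z)"
proof (rule bounded_linear_intro[where K="cmod c"])
  show "c *\<^sub>C (x + y) = c *\<^sub>C x + c *\<^sub>C y" for x y by (rule scaleC_add_right)
  show "c *\<^sub>C (r *\<^sub>R x) = r *\<^sub>R (c *\<^sub>C x)" for r x
    by (simp add: scaleC_of_real[symmetric] scaleC_scaleC mult.commute)
  show "norm (c *\<^sub>C x) \<le> norm x * cmod c" for x :: 'a using norm_scaleC[of c x] by (simp add: mult.commute)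
qed

lemma dense_eq:
  fixes f h :: "'a::topological_space \<Rightarrow> 'b::t2_space"
  assumes "continuous_on UNIV f" "continuous_on UNIV h" "closure R = UNIV" "\<forall>z\<in>R. f z = h z"
  shows "f z = h z"
proof -
  have "closed {z. f z = h z}" by (rule closed_Collect_eq) (fact assms)+
  moreover have "R \<subseteq> {z. f z = h z}" using assms(4) by blast
  ultimately have "closure R \<subseteq> {z. f z = h z}" by (simp add: closure_minimal)
  then show ?thesis using assms(3) by blast
qed

lemma dense_le:
  fixes f h :: "'a::topological_space \<Rightarrow> real"
  assumes "continuous_on UNIV f" "continuous_on UNIV h" "closure R = UNIV" "\<forall>z\<in>R. f z \<le> h z"
  shows "f z \<le> h z"
proof -
  have "closed {z. f z \<le> h z}" by (rule closed_Collect_le) (fact assms)+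
  moreover have "R \<subseteq> {z. f z \<le> h z}" using assms(4) by blast
  ultimately have "closure R \<subseteq> {z. f z \<le> h z}" by (simp add: closure_minimal)
  then show ?thesis using assms(3) by blast
qed

lemma bounded_clinear_cont: "bounded_clinear f \<Longrightarrow> continuous_on S f"
  by (intro linear_continuous_on bounded_clinear_imp_bounded_linear)

lemma ext_op:
  fixes A :: "'a::complex_normed_vector \<Rightarrow> 'c::complex_normed_vector"
    and C :: "'a \<Rightarrow> 'b::{complex_normed_vector,banach}"
  assumes A: "lin_op DA A" and C: "lin_op DC C" and sub: "DA \<subseteq> DC" and c: "c \<ge> 0"
    and bd: "\<forall>x\<in>DA. norm (C x) \<le> c * norm (A x)" and R: "closure (A ` DA) = UNIV"
  shows "\<exists>!G. bounded_clinear G \<and> (\<forall>x\<in>DA. G (A x) = C x)"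
proof -
  have SA: "csubspace DA" and LA: "clinear_on DA A" using A by (auto simp: lin_op_def)
  have SC: "csubspace DC" and LC: "clinear_on DC C" using C by (auto simp: lin_op_def)
  have key: "norm (C x - C y) \<le> c * norm (A x - A y)" if "x\<in>DA" "y\<in>DA" for x y
  proof -
    have "x - y \<in> DA" using csubspace_diff[OF SA] that by blast
    then have "norm (C (x - y)) \<le> c * norm (A (x - y))" using bd by blast
    moreover have "C (x - y) = C x - C y" using clinear_on_diff[OF SC LC] sub that by blast
    moreover have "A (x - y) = A x - A y" using clinear_on_diff[OF SA LA] that by blast
    ultimately show ?thesis by simp
  qed
  define g where "g z = C (SOME x. x \<in> DA \<and> A x = z)" for z
  have g: "g (A x) = C x" if "x \<in> DA" for x
  proof -
    let ?x = "SOME x'. x' \<in> DA \<and> A x' = A x"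
    have "?x \<in> DA \<and> A ?x = A x" by (rule someI[of _ x]) (use that in auto)
    then have "norm (C ?x - C x) \<le> 0" using key[of ?x x] that by simp
    then show ?thesis unfolding g_def by simp
  qed
  have uc: "uniformly_continuous_on (A ` DA) g"
    unfolding uniformly_continuous_on_def
  proof (intro allI impI)
    fix e :: real assume e: "e > 0"
    show "\<exists>d>0. \<forall>x\<in>A ` DA. \<forall>x'\<in>A ` DA. dist x' x < d \<longrightarrow> dist (g x') (g x) < e"
    proof (intro exI[of _ "e/(c+1)"] conjI ballI impI)
      show "e/(c+1) > 0" using e c by simp
      fix z z' assume "z \<in> A ` DA" "z' \<in> A ` DA" "dist z' z < e/(c+1)"
      then obtain x x' where x: "x \<in> DA" "z = A x" and x': "x' \<in> DA" "z' = A x'"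
        and dd: "norm (A x' - A x) < e/(c+1)" by (auto simp: dist_norm)
      have "dist (g z') (g z) = norm (C x' - C x)" using g x x' by (simp add: dist_norm)
      also have "\<dots> \<le> c * norm (A x' - A x)" using key x x' by blast
      also have "\<dots> \<le> c * (e/(c+1))" using dd c by (intro mult_left_mono) auto
      also have "\<dots> < e" using e c by (simp add: field_simps)
      finally show "dist (g z') (g z) < e" .
    qed
  qed
  obtain G where Guc: "uniformly_continuous_on (closure (A ` DA)) G"
    and Gg: "\<And>z. z \<in> A ` DA \<Longrightarrow> g z = G z"
    using uniformly_continuous_on_extension_on_closure[OF uc] by metis
  have Gc: "continuous_on UNIV G" using Guc R uniformly_continuous_imp_continuous by metis
  have GA: "G (A x) = C x" if "x \<in> DA" for x using Gg g that by force
  have Radd: "A x + A y \<in> A ` DA \<and> G (A x + A y) = G (A x) + G (A y)" if "x\<in>DA" "y\<in>DA" for x y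
  proof -
    have xy: "x + y \<in> DA" using SA that unfolding csubspace_def by blast
    have "A (x + y) = A x + A y" using LA that unfolding clinear_on_def by blast
    moreover have "C (x + y) = C x + C y" using LC that sub unfolding clinear_on_def by blast
    ultimately show ?thesis using xy GA that by (metis image_eqI)
  qed
  have Rsc: "a *\<^sub>C A x \<in> A ` DA \<and> G (a *\<^sub>C A x) = a *\<^sub>C G (A x)" if "x\<in>DA" for x a
  proof -
    have xy: "a *\<^sub>C x \<in> DA" using SA that unfolding csubspace_def by blast
    have "A (a *\<^sub>C x) = a *\<^sub>C A x" using LA that unfolding clinear_on_def by blast
    moreover have "C (a *\<^sub>C x) = a *\<^sub>C C x" using LC that sub unfolding clinear_on_def by blast
    ultimately show ?thesis using xy GA that by (metis image_eqI)
  qed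
  have add1: "G (z + w) = G z + G w" if "w \<in> A ` DA" for z w
  proof -
    from that obtain y where y: "y \<in> DA" "w = A y" by blast
    have "G (z + A y) = G z + G (A y)"
    proof (rule dense_eq[where R="A ` DA" and f="\<lambda>z. G (z + A y)" and h="\<lambda>z. G z + G (A y)"])
      show "continuous_on UNIV (\<lambda>z. G (z + A y))"
        by (rule continuous_on_compose2[OF Gc]) (auto intro!: continuous_intros)
      show "continuous_on UNIV (\<lambda>z. G z + G (A y))" by (intro continuous_intros Gc)
      show "closure (A ` DA) = UNIV" by (rule R)
      show "\<forall>z\<in>A ` DA. G (z + A y) = G z + G (A y)" using Radd y by auto
    qed
    then show ?thesis using y by simp
  qed
  have add: "G (z + w) = G z + G w" for z w
  proof (rule dense_eq[where R="A ` DA" and f="\<lambda>w. G (z + w)" and h="\<lambda>w. G z + G w"])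
    show "continuous_on UNIV (\<lambda>w. G (z + w))"
      by (rule continuous_on_compose2[OF Gc]) (auto intro!: continuous_intros)
    show "continuous_on UNIV (\<lambda>w. G z + G w)" by (intro continuous_intros Gc)
    show "closure (A ` DA) = UNIV" by (rule R)
    show "\<forall>w\<in>A ` DA. G (z + w) = G z + G w" using add1 by auto
  qed
  have sc: "G (a *\<^sub>C z) = a *\<^sub>C G z" for a z
  proof (rule dense_eq[where R="A ` DA" and f="\<lambda>z. G (a *\<^sub>C z)" and h="\<lambda>z. a *\<^sub>C G z"])
    show "continuous_on UNIV (\<lambda>z. G (a *\<^sub>C z))"
      by (rule continuous_on_compose2[OF Gc linear_continuous_on[OF bounded_linear_scaleC_right]]) auto
    show "continuous_on UNIV (\<lambda>z. a *\<^sub>C G z)"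
      by (rule continuous_on_compose2[OF linear_continuous_on[OF bounded_linear_scaleC_right] Gc]) auto
    show "closure (A ` DA) = UNIV" by (rule R)
    show "\<forall>z\<in>A ` DA. G (a *\<^sub>C z) = a *\<^sub>C G z" using Rsc by auto
  qed
  have bdG: "norm (G z) \<le> c * norm z" for z
  proof (rule dense_le[where R="A ` DA" and f="\<lambda>z. norm (G z)" and h="\<lambda>z. c * norm z"])
    show "continuous_on UNIV (\<lambda>z. norm (G z))" by (intro continuous_intros Gc)
    show "continuous_on UNIV (\<lambda>z. c * norm z)" by (intro continuous_intros)
    show "closure (A ` DA) = UNIV" by (rule R)
    show "\<forall>z\<in>A ` DA. norm (G z) \<le> c * norm z" using GA bd by auto
  qed
  have bG: "bounded_clinear G"
    unfolding bounded_clinear_def clinear_on_def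
    using add sc bdG by (metis UNIV_I mult.commute)
  show ?thesis
  proof (rule ex1I[of _ G])
    show "bounded_clinear G \<and> (\<forall>x\<in>DA. G (A x) = C x)" using bG GA by blast
    fix G' assume G': "bounded_clinear G' \<and> (\<forall>x\<in>DA. G' (A x) = C x)"
    show "G' = G"
    proof
      fix z
      show "G' z = G z"
        by (rule dense_eq[where R="A ` DA"])
          (use G' GA R in \<open>auto intro: bounded_clinear_cont Gc\<close>)
    qed
  qed
qed


definition res :: "'a::complex_normed_vector set \<Rightarrow> ('a \<Rightarrow> 'a) \<Rightarrow> real \<Rightarrow> 'a \<Rightarrow> 'a" where
  "res DT T t = pinv DT (\<lambda>x. t *\<^sub>R x + T x)"

lemma res_eq: "pinv DT (\<lambda>x. complex_of_real t *\<^sub>C x + T x) = res DT T t"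
  by (simp add: res_def scaleC_of_real)

definition res_ok :: "'a::complex_normed_vector set \<Rightarrow> ('a \<Rightarrow> 'a) \<Rightarrow> real \<Rightarrow> bool" where
  "res_ok DT T M \<longleftrightarrow> M \<ge> 0 \<and> (\<forall>t>0. bounded_linear (res DT T t) \<and>
     (\<forall>y. res DT T t y \<in> DT \<and> t *\<^sub>R res DT T t y + T (res DT T t y) = y) \<and>
     (\<forall>x\<in>DT. res DT T t (t *\<^sub>R x + T x) = x) \<and>
     (\<forall>y. t * norm (res DT T t y) \<le> M * norm y))"

lemma sect_res:
  fixes T :: "'a::complex_normed_vector \<Rightarrow> 'a"
  assumes S: "sectorial DT T"
  shows "\<exists>M. res_ok DT T M"
proof -
  from S obtain \<omega> M0 where w: "0 < \<omega>" "\<omega> < pi" and sp: "spectrum_op DT T \<subseteq> {z. \<bar>Arg z\<bar> \<le> \<omega>} \<union> {0}"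
    and M0: "\<forall>l. \<bar>Arg l\<bar> > \<omega> \<longrightarrow> onorm (\<lambda>y. l *\<^sub>C pinv DT (\<lambda>x. l *\<^sub>C x - T x) y) \<le> M0"
    unfolding sectorial_def by blast
  have main: "bounded_linear (res DT T t) \<and>
     (\<forall>y. res DT T t y \<in> DT \<and> t *\<^sub>R res DT T t y + T (res DT T t y) = y) \<and>
     (\<forall>x\<in>DT. res DT T t (t *\<^sub>R x + T x) = x) \<and>
     (\<forall>y. t * norm (res DT T t y) \<le> M0 * norm y)" if t: "t > 0" for t
  proof -
    define l where "l = complex_of_real (- t)"
    have Al: "Arg l = pi" unfolding l_def using t by (subst Arg_of_real) simp
    have "l \<notin> spectrum_op DT T" using sp Al w t by (auto simp: l_def)
    then have rs: "in_resolvent_set DT T l" by (simp add: spectrum_op_def)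
    define f where "f = (\<lambda>x. l *\<^sub>C x - T x)"
    define Rm where "Rm = pinv DT f"
    have bij: "bij_betw f DT UNIV" and bR: "bounded_clinear Rm"
      using rs by (auto simp: in_resolvent_set_def f_def Rm_def)
    have bRl: "bounded_linear Rm" by (rule bounded_clinear_imp_bounded_linear[OF bR])
    have fl: "f x = - (t *\<^sub>R x + T x)" for x
      by (simp add: f_def l_def scaleC_of_real scaleC_minus_left)
    have inj: "inj_on f DT" and surj: "f ` DT = UNIV" using bij by (auto simp: bij_betw_def)
    have ex: "Rm y \<in> DT \<and> f (Rm y) = y" for y
    proof -
      have "y \<in> f ` DT" using surj by simp
      then obtain x0 where "x0 \<in> DT" "f x0 = y" by blast
      then have "\<exists>!x. x \<in> DT \<and> f x = y" using inj unfolding inj_on_def by blast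
      then show ?thesis unfolding Rm_def pinv_def by (rule theI')
    qed
    have un: "x = Rm y" if "x \<in> DT" "f x = y" for x y
      by (rule inj_onD[OF inj]) (use ex[of y] that in auto)
    define Rp where "Rp = (\<lambda>y. - Rm y)"
    have Rp_ok: "Rp y \<in> DT \<and> t *\<^sub>R Rp y + T (Rp y) = y" for y
    proof -
      have e1: "Rm (- y) = Rp y" using bRl by (simp add: linear_simps Rp_def)
      have e2: "Rm (- y) \<in> DT" "f (Rm (- y)) = - y" using ex[of "- y"] by auto
      then have "- (t *\<^sub>R Rm (- y) + T (Rm (- y))) = - y" using fl[of "Rm (- y)"] by simp
      then have "t *\<^sub>R Rm (- y) + T (Rm (- y)) = y" by (simp only: neg_equal_iff_equal)
      then show ?thesis using e1 e2 by simp
    qed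
    have Rp_un: "x = Rp y" if "x \<in> DT" "t *\<^sub>R x + T x = y" for x y
    proof -
      have "x = Rm (- y)" using un[of x "- y"] that fl[of x] by simp
      moreover have "Rm (- y) = - Rm y" using bRl by (simp add: linear_simps)
      ultimately show ?thesis by (simp add: Rp_def)
    qed
    have resq: "res DT T t = Rp"
    proof
      fix y show "res DT T t y = Rp y"
        unfolding res_def pinv_def
        by (rule the_equality) (use Rp_ok Rp_un in blast)+
    qed
    have bRp: "bounded_linear Rp" unfolding Rp_def by (rule bounded_linear_minus[OF bRl])
    have bl: "bounded_linear (\<lambda>y. l *\<^sub>C Rm y)"
      by (rule bounded_linear_compose[OF bounded_linear_scaleC_right bRl])
    have on: "onorm (\<lambda>y. l *\<^sub>C Rm y) \<le> M0"
      using M0 Al w unfolding Rm_def f_def by auto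
    have bnd: "t * norm (Rp y) \<le> M0 * norm y" for y
    proof -
      have "norm (l *\<^sub>C Rm y) \<le> onorm (\<lambda>y. l *\<^sub>C Rm y) * norm y" by (rule onorm[OF bl])
      also have "\<dots> \<le> M0 * norm y" using on by (simp add: mult_right_mono)
      finally have "norm (l *\<^sub>C Rm y) \<le> M0 * norm y" .
      moreover have "norm (l *\<^sub>C Rm y) = t * norm (Rp y)"
        using t by (simp add: norm_scaleC l_def Rp_def)
      ultimately show ?thesis by simp
    qed
    have inv: "\<forall>x\<in>DT. Rp (t *\<^sub>R x + T x) = x"
    proof
      fix x assume "x \<in> DT"
      then show "Rp (t *\<^sub>R x + T x) = x" by (rule sym[OF Rp_un]) simp
    qed
    show ?thesis unfolding resq using Rp_ok bRp bnd inv by blast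
  qed
  have mb: "M0 * norm y \<le> max M0 0 * norm y" for y :: 'a by (simp add: mult_right_mono)
  have "\<forall>t>0. bounded_linear (res DT T t) \<and>
     (\<forall>y. res DT T t y \<in> DT \<and> t *\<^sub>R res DT T t y + T (res DT T t y) = y) \<and>
     (\<forall>x\<in>DT. res DT T t (t *\<^sub>R x + T x) = x) \<and>
     (\<forall>y. t * norm (res DT T t y) \<le> max M0 0 * norm y)"
  proof (intro allI impI)
    fix t :: real assume t: "t > 0"
    show "bounded_linear (res DT T t) \<and>
     (\<forall>y. res DT T t y \<in> DT \<and> t *\<^sub>R res DT T t y + T (res DT T t y) = y) \<and>
     (\<forall>x\<in>DT. res DT T t (t *\<^sub>R x + T x) = x) \<and>
     (\<forall>y. t * norm (res DT T t y) \<le> max M0 0 * norm y)"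
    proof -
      note m = main[OF t]
      then have "\<forall>y. t * norm (res DT T t y) \<le> M0 * norm y" by blast
      then have "\<forall>y. t * norm (res DT T t y) \<le> max M0 0 * norm y" using mb order_trans by blast
      then show ?thesis using m by blast
    qed
  qed
  then show ?thesis unfolding res_ok_def by (intro exI[of _ "max M0 0"]) simp
qed


lemma strong_conv:
  fixes T :: "'a::complex_normed_vector \<Rightarrow> 'a"
  assumes ok: "res_ok DT T M" and R: "closure (T ` DT) = UNIV"
  shows "((\<lambda>t. t *\<^sub>R res DT T t w) \<longlongrightarrow> 0) (at_right 0)"
  unfolding tendsto_iff
proof (intro allI impI)
  fix e :: real assume e: "e > 0"
  have M: "M \<ge> 0" using ok by (simp add: res_ok_def)
  have P: "bounded_linear (res DT T t) \<and>
     (\<forall>y. res DT T t y \<in> DT \<and> t *\<^sub>R res DT T t y + T (res DT T t y) = y) \<and>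
     (\<forall>x\<in>DT. res DT T t (t *\<^sub>R x + T x) = x) \<and>
     (\<forall>y. t * norm (res DT T t y) \<le> M * norm y)" if "t > 0" for t
    using ok that unfolding res_ok_def by blast
  define e' where "e' = e / (2 * (M + 1))"
  have e'p: "e' > 0" using e M by (simp add: e'_def)
  have "w \<in> closure (T ` DT)" using R by simp
  then obtain z where z: "z \<in> T ` DT" "dist z w < e'" using closure_approachable e'p by blast
  then obtain x where x: "x \<in> DT" "z = T x" by blast
  define b where "b = e / (2 * (1 + M) * (norm x + 1))"
  have nx: "norm x + 1 > 0" using norm_ge_zero[of x] by linarith
  have bp: "b > 0" unfolding b_def using e M nx by (intro divide_pos_pos mult_pos_pos) auto
  show "\<forall>\<^sub>F t in at_right 0. dist (t *\<^sub>R res DT T t w) 0 < e"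
    unfolding eventually_at_right_field
  proof (intro exI[of _ b] conjI allI impI)
    show "b > 0" by (rule bp)
    fix t :: real assume t: "t > 0" "t < b"
    have bl: "bounded_linear (res DT T t)" and inv: "\<forall>x\<in>DT. res DT T t (t *\<^sub>R x + T x) = x"
      and bd: "\<forall>y. t * norm (res DT T t y) \<le> M * norm y" using P[OF t(1)] by blast+
    interpret r: bounded_linear "res DT T t" by (rule bl)
    have rTx: "res DT T t (T x) = x - t *\<^sub>R res DT T t x"
    proof -
      have "T x = (t *\<^sub>R x + T x) - t *\<^sub>R x" by simp
      then have "res DT T t (T x) = res DT T t (t *\<^sub>R x + T x) - t *\<^sub>R res DT T t x"
        by (metis r.diff r.scaleR)
      then show ?thesis using inv x by simp
    qed
    have n1: "t * norm (res DT T t (w - z)) \<le> e / 2"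
    proof -
      have "t * norm (res DT T t (w - z)) \<le> M * norm (w - z)" using bd by blast
      also have "\<dots> \<le> M * e'" using z(2) M by (intro mult_left_mono) (auto simp: dist_norm norm_minus_commute)
      also have "\<dots> \<le> e / 2" using e M unfolding e'_def by (simp add: field_simps)
      finally show ?thesis .
    qed
    have n2: "t * norm (res DT T t z) < e / 2"
    proof -
      have "norm (res DT T t z) \<le> norm x + norm (t *\<^sub>R res DT T t x)"
        using rTx x norm_triangle_ineq4[of x "t *\<^sub>R res DT T t x"] by simp
      also have "norm (t *\<^sub>R res DT T t x) = t * norm (res DT T t x)" using t by simp
      also have "\<dots> \<le> M * norm x" using bd by blast
      finally have "norm (res DT T t z) \<le> (1 + M) * norm x" by (simp add: algebra_simps)
      then have "t * norm (res DT T t z) \<le> t * ((1 + M) * norm x)" using t by (intro mult_left_mono) auto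
      also have "\<dots> \<le> b * ((1 + M) * norm x)" using t M by (intro mult_right_mono) auto
      also have "\<dots> < e / 2"
      proof -
        have m1: "1 + M > 0" using M by linarith
        have bd: "b * (2 * (1 + M) * (norm x + 1)) = e" unfolding b_def using m1 nx by simp
        have p: "2 * b * (1 + M) > 0" using bp m1 by simp
        have "(2 * b * (1 + M)) * norm x < (2 * b * (1 + M)) * (norm x + 1)"
          by (rule mult_strict_left_mono[OF _ p]) simp
        then have "2 * (b * ((1 + M) * norm x)) < e" using bd by (simp add: algebra_simps)
        then show ?thesis by simp
      qed
      finally show ?thesis .
    qed
    have "res DT T t w = res DT T t (w - z) + res DT T t z" by (simp add: r.diff)
    then have "norm (res DT T t w) \<le> norm (res DT T t (w - z)) + norm (res DT T t z)"
      by (metis norm_triangle_ineq)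
    then have "t * norm (res DT T t w) \<le> t * norm (res DT T t (w - z)) + t * norm (res DT T t z)"
      using t by (simp add: distrib_left[symmetric] mult_left_mono)
    then have "t * norm (res DT T t w) < e" using n1 n2 by simp
    then show "dist (t *\<^sub>R res DT T t w) 0 < e" using t by simp
  qed
qed


lemma limit_bound:
  fixes A :: "'a::complex_normed_vector \<Rightarrow> 'a" and D :: "'b::complex_normed_vector \<Rightarrow> 'b"
    and C :: "'a \<Rightarrow> 'b" and B :: "'b \<Rightarrow> 'a"
  assumes okA: "res_ok DA A MA" and okD: "res_ok DD D MD"
    and RA: "closure (A ` DA) = UNIV" and RD: "closure (D ` DD) = UNIV"
    and G: "bounded_linear G" and GC: "\<forall>x\<in>DA. G (A x) = C x"
    and H: "bounded_linear H" and HB: "\<forall>y\<in>DD. H (D y) = B y"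
    and eps: "\<epsilon> > 0" and q: "\<forall>t\<in>{0<..<\<epsilon>}. onorm (\<lambda>u. B (res DD D t (C (res DA A t u)))) \<le> q"
  shows "norm (H (G u)) \<le> q * norm u"
proof -
  interpret G: bounded_linear G by (rule G)
  interpret H: bounded_linear H by (rule H)
  define a where "a t = t *\<^sub>R res DA A t u" for t
  define b where "b t = t *\<^sub>R res DD D t (G u)" for t
  have la: "((\<lambda>t. norm (a t)) \<longlongrightarrow> 0) (at_right 0)"
    unfolding a_def by (rule tendsto_norm_zero[OF strong_conv[OF okA RA]])
  have lb: "((\<lambda>t. norm (b t)) \<longlongrightarrow> 0) (at_right 0)"
    unfolding b_def by (rule tendsto_norm_zero[OF strong_conv[OF okD RD]])
  obtain KG where KG: "KG > 0" "\<And>x. norm (G x) \<le> norm x * KG" using G.pos_bounded by blast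
  obtain KH where KH: "KH > 0" "\<And>x. norm (H x) \<le> norm x * KH" using H.pos_bounded by blast
  have MD: "MD \<ge> 0" using okD by (simp add: res_ok_def)
  have ev: "\<forall>\<^sub>F t in at_right 0. norm (H (G u)) \<le> q * norm u + KH * (KG * norm (a t) + norm (b t) + MD * (KG * norm (a t)))"
    unfolding eventually_at_right_field
  proof (intro exI[of _ \<epsilon>] conjI allI impI)
    show "\<epsilon> > 0" by (rule eps)
    fix t :: real assume t: "t > 0" "t < \<epsilon>"
    have PA: "bounded_linear (res DA A t)" "\<forall>y. res DA A t y \<in> DA \<and> t *\<^sub>R res DA A t y + A (res DA A t y) = y"
      using okA t unfolding res_ok_def by blast+
    have PD: "bounded_linear (res DD D t)" "\<forall>y. res DD D t y \<in> DD \<and> t *\<^sub>R res DD D t y + D (res DD D t y) = y"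
      "\<forall>y. t * norm (res DD D t y) \<le> MD * norm y"
      using okD t unfolding res_ok_def by blast+
    interpret RA: bounded_linear "res DA A t" by (rule PA(1))
    interpret RD: bounded_linear "res DD D t" by (rule PD(1))
    define P where "P v = v - t *\<^sub>R res DA A t v" for v
    define Q where "Q w = w - t *\<^sub>R res DD D t w" for w
    have CP: "C (res DA A t v) = G (P v)" for v
    proof -
      have "A (res DA A t v) = P v" using PA(2) unfolding P_def by (metis add_diff_cancel_left')
      then show ?thesis using GC PA(2) by metis
    qed
    have BQ: "B (res DD D t w) = H (Q w)" for w
    proof -
      have "D (res DD D t w) = Q w" using PD(2) unfolding Q_def by (metis add_diff_cancel_left')
      then show ?thesis using HB PD(2) by metis
    qed
    define K where "K = (\<lambda>u. B (res DD D t (C (res DA A t u))))"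
    have Keq: "K = (\<lambda>v. H (Q (G (P v))))" unfolding K_def by (simp add: CP BQ)
    have bP: "bounded_linear P" unfolding P_def
      by (intro bounded_linear_sub bounded_linear_ident bounded_linear_const_scaleR PA(1))
    have bQ: "bounded_linear Q" unfolding Q_def
      by (intro bounded_linear_sub bounded_linear_ident bounded_linear_const_scaleR PD(1))
    have bK: "bounded_linear K" unfolding Keq
      by (intro bounded_linear_compose[OF H] bounded_linear_compose[OF bQ]
          bounded_linear_compose[OF G] bP)
    have nK: "norm (K u) \<le> q * norm u"
    proof -
      have "norm (K u) \<le> onorm K * norm u" by (rule onorm[OF bK])
      also have "\<dots> \<le> q * norm u" using q t unfolding K_def by (intro mult_right_mono) auto
      finally show ?thesis .
    qed
    have diff: "H (G u) - K u = H (G (a t) + b t - t *\<^sub>R res DD D t (G (a t)))"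
    proof -
      have "P u = u - a t" unfolding P_def a_def by simp
      then have "G (P u) = G u - G (a t)" by (simp add: G.diff)
      then have "Q (G (P u)) = Q (G u - G (a t))" by simp
      also have "\<dots> = G u - G (a t) - (b t - t *\<^sub>R res DD D t (G (a t)))"
        unfolding Q_def b_def by (simp add: RD.diff scaleR_diff_right)
      finally have "Q (G (P u)) = G u - G (a t) - (b t - t *\<^sub>R res DD D t (G (a t)))" .
      then have "K u = H (G u - G (a t) - (b t - t *\<^sub>R res DD D t (G (a t))))" unfolding Keq by simp
      then have "H (G u) - K u = H (G u) - H (G u - G (a t) - (b t - t *\<^sub>R res DD D t (G (a t))))"
        by simp
      also have "\<dots> = H (G u - (G u - G (a t) - (b t - t *\<^sub>R res DD D t (G (a t)))))"
        by (rule H.diff[symmetric])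
      also have "\<dots> = H (G (a t) + b t - t *\<^sub>R res DD D t (G (a t)))"
        by (rule arg_cong[where f=H]) (simp add: algebra_simps)
      finally show ?thesis .
    qed
    have n3: "norm (t *\<^sub>R res DD D t (G (a t))) \<le> MD * (KG * norm (a t))"
    proof -
      have "norm (t *\<^sub>R res DD D t (G (a t))) = t * norm (res DD D t (G (a t)))" using t by simp
      also have "\<dots> \<le> MD * norm (G (a t))" using PD(3) by blast
      also have "\<dots> \<le> MD * (KG * norm (a t))" using MD KG(2)[of "a t"]
        by (intro mult_left_mono) (auto simp: mult.commute)
      finally show ?thesis .
    qed
    have "norm (H (G u) - K u) \<le> KH * (KG * norm (a t) + norm (b t) + MD * (KG * norm (a t)))"
    proof -
      have "norm (H (G u) - K u) \<le> norm (G (a t) + b t - t *\<^sub>R res DD D t (G (a t))) * KH"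
        unfolding diff by (rule KH(2))
      also have "\<dots> \<le> (KG * norm (a t) + norm (b t) + MD * (KG * norm (a t))) * KH"
      proof (rule mult_right_mono)
        have "norm (G (a t) + b t - t *\<^sub>R res DD D t (G (a t))) \<le> norm (G (a t)) + norm (b t) + norm (t *\<^sub>R res DD D t (G (a t)))"
        proof -
          have "norm (G (a t) + b t - t *\<^sub>R res DD D t (G (a t))) \<le> norm (G (a t) + b t) + norm (t *\<^sub>R res DD D t (G (a t)))"
            by (rule norm_triangle_ineq4)
          moreover have "norm (G (a t) + b t) \<le> norm (G (a t)) + norm (b t)" by (rule norm_triangle_ineq)
          ultimately show ?thesis by linarith
        qed
        then show "norm (G (a t) + b t - t *\<^sub>R res DD D t (G (a t))) \<le> KG * norm (a t) + norm (b t) + MD * (KG * norm (a t))"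
          using n3 KG(2)[of "a t"] by (simp add: mult.commute)
        show "0 \<le> KH" using KH by simp
      qed
      finally show ?thesis by (simp add: mult.commute)
    qed
    moreover have "norm (H (G u)) \<le> norm (K u) + norm (H (G u) - K u)"
      by (rule norm_triangle_sub)
    ultimately show "norm (H (G u)) \<le> q * norm u + KH * (KG * norm (a t) + norm (b t) + MD * (KG * norm (a t)))"
      using nK by linarith
  qed
  have lim: "((\<lambda>t. q * norm u + KH * (KG * norm (a t) + norm (b t) + MD * (KG * norm (a t))))
      \<longlongrightarrow> q * norm u + KH * (KG * 0 + 0 + MD * (KG * 0))) (at_right 0)"
    by (intro tendsto_intros la lb)
  have "norm (H (G u)) \<le> q * norm u + KH * (KG * 0 + 0 + MD * (KG * 0))"
    by (rule tendsto_lowerbound[OF lim ev trivial_limit_at_right_real])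
  then show ?thesis by simp
qed

lemma est1:
  fixes G :: "'a::real_normed_vector \<Rightarrow> 'b::real_normed_vector" and H :: "'b \<Rightarrow> 'a"
  assumes G: "bounded_linear G" and H: "bounded_linear H" and c: "c \<ge> 0"
    and inv: "\<forall>u. norm u \<le> c * norm (u - H (G u))"
  shows "\<exists>K. \<forall>u v. norm (u, v) \<le> K * norm (u + H v, G u + v)"
proof -
  interpret G: bounded_linear G by (rule G)
  interpret H: bounded_linear H by (rule H)
  obtain KG where KG: "KG > 0" "\<And>x. norm (G x) \<le> norm x * KG" using G.pos_bounded by blast
  obtain KH where KH: "KH > 0" "\<And>x. norm (H x) \<le> norm x * KH" using H.pos_bounded by blast
  show ?thesis
  proof (intro exI[of _ "c * (1 + KH) + 1 + KG * (c * (1 + KH))"] allI)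
    fix u :: 'a and v :: 'b
    define N where "N = norm (u + H v, G u + v)"
    have nf: "norm (u + H v) \<le> N" unfolding N_def by (rule norm_fst_le)
    have ng: "norm (G u + v) \<le> N" unfolding N_def by (rule norm_snd_le)
    have eq: "u - H (G u) = (u + H v) - H (G u + v)" by (simp add: H.add)
    have "norm u \<le> c * norm ((u + H v) - H (G u + v))" using inv[rule_format, of u] unfolding eq .
    also have "\<dots> \<le> c * (norm (u + H v) + norm (H (G u + v)))"
      by (rule mult_left_mono[OF norm_triangle_ineq4 c])
    also have "\<dots> \<le> c * (N + N * KH)"
    proof (rule mult_left_mono[OF _ c])
      have h1: "norm (H (G u + v)) \<le> norm (G u + v) * KH" by (rule KH(2))
      have h2: "norm (G u + v) * KH \<le> N * KH" using ng KH(1) by (intro mult_right_mono) auto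
      show "norm (u + H v) + norm (H (G u + v)) \<le> N + N * KH" using nf h1 h2 by linarith
    qed
    also have "c * (N + N * KH) = c * (1 + KH) * N" by (simp only: algebra_simps)
    finally have nu: "norm u \<le> c * (1 + KH) * N" .
    have "norm v = norm ((G u + v) - G u)" by simp
    also have "\<dots> \<le> norm (G u + v) + norm (G u)" by (rule norm_triangle_ineq4)
    also have "\<dots> \<le> N + KG * (c * (1 + KH) * N)"
    proof -
      have h1: "norm (G u) \<le> norm u * KG" by (rule KG(2))
      have h2: "norm u * KG \<le> (c * (1 + KH) * N) * KG" using nu KG(1) by (intro mult_right_mono) auto
      show ?thesis using ng h1 h2 by (simp add: mult.commute)
    qed
    finally have nv: "norm v \<le> N + KG * (c * (1 + KH) * N)" .
    have "norm (u, v) \<le> norm u + norm v" by (rule norm_Pair_le)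
    also have "\<dots> \<le> c * (1 + KH) * N + (N + KG * (c * (1 + KH) * N))" using nu nv by (rule add_mono)
    also have "\<dots> = (c * (1 + KH) + 1 + KG * (c * (1 + KH))) * N" by (simp only: algebra_simps)
    finally show "norm (u, v) \<le> (c * (1 + KH) + 1 + KG * (c * (1 + KH))) * norm (u + H v, G u + v)"
      unfolding N_def .
  qed
qed

lemma est2:
  fixes G :: "'a::real_normed_vector \<Rightarrow> 'b::real_normed_vector" and H :: "'b \<Rightarrow> 'a"
  assumes G: "bounded_linear G" and H: "bounded_linear H" and c: "c \<ge> 0"
    and inv: "\<forall>v. norm v \<le> c * norm (v - G (H v))"
  shows "\<exists>K. \<forall>u v. norm (u, v) \<le> K * norm (u + H v, G u + v)"
proof -
  obtain K where K: "\<forall>v u. norm (v, u) \<le> K * norm (v + G u, H v + u)"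
    using est1[OF H G c inv] by blast
  show ?thesis
  proof (intro exI[of _ K] allI)
    fix u :: 'a and v :: 'b
    have "norm (u, v) = norm (v, u)" by (rule norm_commute)
    also have "\<dots> \<le> K * norm (v + G u, H v + u)" using K by blast
    also have "\<dots> = K * norm (u + H v, G u + v)"
    proof -
      have e: "v + G u = G u + v" "H v + u = u + H v" by (rule add.commute)+
      show ?thesis unfolding e by (simp only: norm_commute[of "G u + v"])
    qed
    finally show "norm (u, v) \<le> K * norm (u + H v, G u + v)" .
  qed
qed

theorem proposition4p4:
  fixes DA :: "'a::{complex_normed_vector,banach} set" and A :: "'a \<Rightarrow> 'a"
    and DD :: "'b::{complex_normed_vector,banach} set" and D :: "'b \<Rightarrow> 'b"
    and DB :: "'b set" and B :: "'b \<Rightarrow> 'a"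
    and DC :: "'a set" and C :: "'a \<Rightarrow> 'b"
    and cA cD :: real
  assumes A: "closed_dd_op DA A" and D: "closed_dd_op DD D"
    and B: "lin_op DB B" and C: "lin_op DC C"
    and DDB: "DD \<subseteq> DB" and DAC: "DA \<subseteq> DC"
    and cA: "cA \<ge> 0" and cD: "cD \<ge> 0"
    and Cbd: "\<forall>x\<in>DA. norm (C x) \<le> cA * norm (A x)"
    and Bbd: "\<forall>y\<in>DD. norm (B y) \<le> cD * norm (D y)"
    and RA: "closure (A ` DA) = UNIV" and RD: "closure (D ` DD) = UNIV"
  shows "(\<exists>!G. bounded_clinear G \<and> (\<forall>x\<in>DA. G (A x) = C x))
    \<and> (\<exists>!H. bounded_clinear H \<and> (\<forall>y\<in>DD. H (D y) = B y))
    \<and> (\<forall>G H. bounded_clinear G \<and> (\<forall>x\<in>DA. G (A x) = C x)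
          \<and> bounded_clinear H \<and> (\<forall>y\<in>DD. H (D y) = B y)
          \<and> (boundedly_invertible (\<lambda>u. u - H (G u)) \<or> boundedly_invertible (\<lambda>v. v - G (H v)))
        \<longrightarrow> (\<exists>K. \<forall>x\<in>DA. \<forall>y\<in>DD. norm (A x, D y) \<le> K * norm (A x + B y, C x + D y)))
    \<and> (sectorial DA A \<and> sectorial DD D \<and>
        (\<exists>\<epsilon>>0.
          (\<exists>q<1. \<forall>t\<in>{0<..<\<epsilon>}.
             onorm (\<lambda>u. B (pinv DD (\<lambda>y. complex_of_real t *\<^sub>C y + D y)
                       (C (pinv DA (\<lambda>x. complex_of_real t *\<^sub>C x + A x) u)))) \<le> q)
        \<or> (\<exists>q<1. \<forall>t\<in>{0<..<\<epsilon>}.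
             onorm (\<lambda>v. C (pinv DA (\<lambda>x. complex_of_real t *\<^sub>C x + A x)
                       (B (pinv DD (\<lambda>y. complex_of_real t *\<^sub>C y + D y) v)))) \<le> q))
        \<longrightarrow> (\<exists>K. \<forall>x\<in>DA. \<forall>y\<in>DD. norm (A x, D y) \<le> K * norm (A x + B y, C x + D y)))"
proof -
  have LA: "lin_op DA A" using A by (simp add: closed_dd_op_def)
  have LD: "lin_op DD D" using D by (simp add: closed_dd_op_def)
  have P1: "\<exists>!G. bounded_clinear G \<and> (\<forall>x\<in>DA. G (A x) = C x)"
    by (rule ext_op[OF LA C DAC cA Cbd RA])
  have P2: "\<exists>!H. bounded_clinear H \<and> (\<forall>y\<in>DD. H (D y) = B y)"
    by (rule ext_op[OF LD B DDB cD Bbd RD])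
  have fin: "\<exists>K. \<forall>x\<in>DA. \<forall>y\<in>DD. norm (A x, D y) \<le> K * norm (A x + B y, C x + D y)"
    if GC: "\<forall>x\<in>DA. G (A x) = C x" and HB: "\<forall>y\<in>DD. H (D y) = B y"
      and K: "\<exists>K. \<forall>u v. norm (u, v) \<le> K * norm (u + H v, G u + v)" for G H
  proof -
    from K obtain K where K: "\<forall>u v. norm (u, v) \<le> K * norm (u + H v, G u + v)" by blast
    show ?thesis
    proof (intro exI[of _ K] ballI)
      fix x y assume x: "x \<in> DA" and y: "y \<in> DD"
      have "norm (A x, D y) \<le> K * norm (A x + H (D y), G (A x) + D y)" using K by blast
      then show "norm (A x, D y) \<le> K * norm (A x + B y, C x + D y)" using GC HB x y by simp
    qed
  qed
  have P3: "\<forall>G H. bounded_clinear G \<and> (\<forall>x\<in>DA. G (A x) = C x)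
          \<and> bounded_clinear H \<and> (\<forall>y\<in>DD. H (D y) = B y)
          \<and> (boundedly_invertible (\<lambda>u. u - H (G u)) \<or> boundedly_invertible (\<lambda>v. v - G (H v)))
        \<longrightarrow> (\<exists>K. \<forall>x\<in>DA. \<forall>y\<in>DD. norm (A x, D y) \<le> K * norm (A x + B y, C x + D y))"
  proof (intro allI impI)
    fix G H
    assume h: "bounded_clinear G \<and> (\<forall>x\<in>DA. G (A x) = C x)
          \<and> bounded_clinear H \<and> (\<forall>y\<in>DD. H (D y) = B y)
          \<and> (boundedly_invertible (\<lambda>u. u - H (G u)) \<or> boundedly_invertible (\<lambda>v. v - G (H v)))"
    have bG: "bounded_linear G" using h bounded_clinear_imp_bounded_linear by blast
    have bH: "bounded_linear H" using h bounded_clinear_imp_bounded_linear by blast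
    have GC: "\<forall>x\<in>DA. G (A x) = C x" and HB: "\<forall>y\<in>DD. H (D y) = B y" using h by blast+
    from h have "boundedly_invertible (\<lambda>u. u - H (G u)) \<or> boundedly_invertible (\<lambda>v. v - G (H v))" by blast
    then have "\<exists>K. \<forall>u v. norm (u, v) \<le> K * norm (u + H v, G u + v)"
    proof
      assume "boundedly_invertible (\<lambda>u. u - H (G u))"
      then obtain S where S: "bounded_clinear S" "\<forall>x. S (x - H (G x)) = x"
        unfolding boundedly_invertible_def by blast
      then obtain KS where KS: "\<forall>x. norm (S x) \<le> norm x * KS" unfolding bounded_clinear_def by blast
      have "\<forall>u. norm u \<le> max KS 0 * norm (u - H (G u))"
      proof
        fix u
        have "norm u = norm (S (u - H (G u)))" using S by simp
        also have "\<dots> \<le> norm (u - H (G u)) * KS" using KS by blast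
        also have "\<dots> \<le> norm (u - H (G u)) * max KS 0" by (intro mult_left_mono) auto
        finally show "norm u \<le> max KS 0 * norm (u - H (G u))" by (simp add: mult.commute)
      qed
      note inv = this
      show ?thesis using est1[OF bG bH _ inv] by simp
    next
      assume "boundedly_invertible (\<lambda>v. v - G (H v))"
      then obtain S where S: "bounded_clinear S" "\<forall>x. S (x - G (H x)) = x"
        unfolding boundedly_invertible_def by blast
      then obtain KS where KS: "\<forall>x. norm (S x) \<le> norm x * KS" unfolding bounded_clinear_def by blast
      have "\<forall>v. norm v \<le> max KS 0 * norm (v - G (H v))"
      proof
        fix v
        have "norm v = norm (S (v - G (H v)))" using S by simp
        also have "\<dots> \<le> norm (v - G (H v)) * KS" using KS by blast
        also have "\<dots> \<le> norm (v - G (H v)) * max KS 0" by (intro mult_left_mono) auto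
        finally show "norm v \<le> max KS 0 * norm (v - G (H v))" by (simp add: mult.commute)
      qed
      note inv = this
      show ?thesis using est2[OF bG bH _ inv] by simp
    qed
    then show "\<exists>K. \<forall>x\<in>DA. \<forall>y\<in>DD. norm (A x, D y) \<le> K * norm (A x + B y, C x + D y)"
      using fin GC HB by blast
  qed
  have P4: "sectorial DA A \<and> sectorial DD D \<and>
        (\<exists>\<epsilon>>0.
          (\<exists>q<1. \<forall>t\<in>{0<..<\<epsilon>}.
             onorm (\<lambda>u. B (pinv DD (\<lambda>y. complex_of_real t *\<^sub>C y + D y)
                       (C (pinv DA (\<lambda>x. complex_of_real t *\<^sub>C x + A x) u)))) \<le> q)
        \<or> (\<exists>q<1. \<forall>t\<in>{0<..<\<epsilon>}.
             onorm (\<lambda>v. C (pinv DA (\<lambda>x. complex_of_real t *\<^sub>C x + A x)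
                       (B (pinv DD (\<lambda>y. complex_of_real t *\<^sub>C y + D y) v)))) \<le> q))
        \<longrightarrow> (\<exists>K. \<forall>x\<in>DA. \<forall>y\<in>DD. norm (A x, D y) \<le> K * norm (A x + B y, C x + D y))"
  proof (intro impI)
    assume h: "sectorial DA A \<and> sectorial DD D \<and>
        (\<exists>\<epsilon>>0.
          (\<exists>q<1. \<forall>t\<in>{0<..<\<epsilon>}.
             onorm (\<lambda>u. B (pinv DD (\<lambda>y. complex_of_real t *\<^sub>C y + D y)
                       (C (pinv DA (\<lambda>x. complex_of_real t *\<^sub>C x + A x) u)))) \<le> q)
        \<or> (\<exists>q<1. \<forall>t\<in>{0<..<\<epsilon>}.
             onorm (\<lambda>v. C (pinv DA (\<lambda>x. complex_of_real t *\<^sub>C x + A x)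
                       (B (pinv DD (\<lambda>y. complex_of_real t *\<^sub>C y + D y) v)))) \<le> q))"
    then have sA: "sectorial DA A" and sD: "sectorial DD D"
      and ex: "\<exists>\<epsilon>>0. (\<exists>q<1. \<forall>t\<in>{0<..<\<epsilon>}. onorm (\<lambda>u. B (res DD D t (C (res DA A t u)))) \<le> q)
          \<or> (\<exists>q<1. \<forall>t\<in>{0<..<\<epsilon>}. onorm (\<lambda>v. C (res DA A t (B (res DD D t v)))) \<le> q)"
      unfolding res_eq by blast+
    obtain MA where okA: "res_ok DA A MA" using sect_res[OF sA] by blast
    obtain MD where okD: "res_ok DD D MD" using sect_res[OF sD] by blast
    from P1 obtain G where G: "bounded_clinear G" "\<forall>x\<in>DA. G (A x) = C x" by blast
    from P2 obtain H where H: "bounded_clinear H" "\<forall>y\<in>DD. H (D y) = B y" by blast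
    have bG: "bounded_linear G" using G(1) by (rule bounded_clinear_imp_bounded_linear)
    have bH: "bounded_linear H" using H(1) by (rule bounded_clinear_imp_bounded_linear)
    from ex obtain \<epsilon> where eps: "\<epsilon> > 0" and disj:
      "(\<exists>q<1. \<forall>t\<in>{0<..<\<epsilon>}. onorm (\<lambda>u. B (res DD D t (C (res DA A t u)))) \<le> q)
          \<or> (\<exists>q<1. \<forall>t\<in>{0<..<\<epsilon>}. onorm (\<lambda>v. C (res DA A t (B (res DD D t v)))) \<le> q)" by blast
    from disj have "\<exists>K. \<forall>u v. norm (u, v) \<le> K * norm (u + H v, G u + v)"
    proof
      assume "\<exists>q<1. \<forall>t\<in>{0<..<\<epsilon>}. onorm (\<lambda>u. B (res DD D t (C (res DA A t u)))) \<le> q"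
      then obtain q where q: "q < 1" "\<forall>t\<in>{0<..<\<epsilon>}. onorm (\<lambda>u. B (res DD D t (C (res DA A t u)))) \<le> q"
        by blast
      have hg: "norm (H (G u)) \<le> q * norm u" for u
        by (rule limit_bound[OF okA okD RA RD bG G(2) bH H(2) eps q(2)])
      have "\<forall>u. norm u \<le> (1 / (1 - q)) * norm (u - H (G u))"
      proof
        fix u
        have "norm u \<le> norm (H (G u)) + norm (u - H (G u))" by (rule norm_triangle_sub)
        then have "norm u - q * norm u \<le> norm (u - H (G u))" using hg[of u] by linarith
        then have "(1 - q) * norm u \<le> norm (u - H (G u))" by (simp add: left_diff_distrib)
        then show "norm u \<le> (1 / (1 - q)) * norm (u - H (G u))" using q(1) by (simp add: field_simps)
      qed
      note inv = this
      show ?thesis using est1[OF bG bH _ inv] q(1) by simp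
    next
      assume "\<exists>q<1. \<forall>t\<in>{0<..<\<epsilon>}. onorm (\<lambda>v. C (res DA A t (B (res DD D t v)))) \<le> q"
      then obtain q where q: "q < 1" "\<forall>t\<in>{0<..<\<epsilon>}. onorm (\<lambda>v. C (res DA A t (B (res DD D t v)))) \<le> q"
        by blast
      have gh: "norm (G (H v)) \<le> q * norm v" for v
        by (rule limit_bound[OF okD okA RD RA bH H(2) bG G(2) eps q(2)])
      have "\<forall>v. norm v \<le> (1 / (1 - q)) * norm (v - G (H v))"
      proof
        fix v
        have "norm v \<le> norm (G (H v)) + norm (v - G (H v))" by (rule norm_triangle_sub)
        then have "norm v - q * norm v \<le> norm (v - G (H v))" using gh[of v] by linarith
        then have "(1 - q) * norm v \<le> norm (v - G (H v))" by (simp add: left_diff_distrib)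
        then show "norm v \<le> (1 / (1 - q)) * norm (v - G (H v))" using q(1) by (simp add: field_simps)
      qed
      note inv = this
      show ?thesis using est2[OF bG bH _ inv] q(1) by simp
    qed
    then show "\<exists>K. \<forall>x\<in>DA. \<forall>y\<in>DD. norm (A x, D y) \<le> K * norm (A x + B y, C x + D y)"
      using fin G(2) H(2) by blast
  qed
  show ?thesis by (intro conjI P1 P2 P3 P4)
qed

end
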